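(* Let $1\le i\le n-1$ and $m\ge1$ be an integer, with the convention that $X^{(k)}=0$ for $k<0$. Then in ${\boldsymbol U}_{v}(\mathfrak q_n)$ (in fact in ${\boldsymbol U}_{v,\mathcal Z}$): \begin{align*} (1)\ &\mathsf E_{\bar i}\mathsf F_i^{(m)}=\mathsf F_i^{(m)}\mathsf E_{\bar i}-v^{1-m}\mathsf F_i^{(m-1)}\mathsf K_i\mathsf K_{\overline{i+1}}+v^{m-1}\mathsf F_i^{(m-1)}\mathsf K_{\bar i}\mathsf K_{i+1}-\mathsf F_i^{(m-2)}\mathsf K_i\mathsf K_{i+1}\mathsf F_{\bar i};\\ (2)\ &\mathsf E_i^{(m)}\mathsf F_{\bar i}=\mathsf F_{\bar i}\mathsf E_i^{(m)}+v^{m-1}\mathsf E_i^{(m-1)}\mathsf K_{\bar i}\mathsf K_{i+1}^{-1}-v^{-m+1}\mathsf E_i^{(m-1)}\mathsf K_{\overline{i+1}}\mathsf K_i^{-1}+\mathsf E_i^{(m-2)}\mathsf E_{\bar i}\mathsf K_{i+1}^{-1}\mathsf K_i^{-1};\\ (3)\ &\mathsf E_{\bar i}\mathsf E_{i+1}^{(m)}=v^m\mathsf E_{i+1}^{(m)}\mathsf E_{\bar i}+\mathsf E_{i+1}^{(m-1)}(\mathsf E_i\mathsf E_{\overline{i+1}}-v\mathsf E_{\overline{i+1}}\mathsf E_i)\quad(\text{here } i\le n-2). \end{align*}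
   Context: Let $v$ be an indeterminate. The quantum queer superalgebra ${\boldsymbol U}_{v}(\mathfrak q_n)$ is the associative superalgebra over $\mathbb Q(v)$ generated by even generators $\mathsf K_i,\mathsf K_i^{-1}$ ($1\le i\le n$), $\mathsf E_j,\mathsf F_j$ ($1\le j\le n-1$) and odd generators $\mathsf K_{\bar i}$ ($1\le i\le n$), $\mathsf E_{\bar j},\mathsf F_{\bar j}$ ($1\le j\le n-1$), subject to the following relations (indices are taken only where they make sense), where $(\epsilon_i,\alpha_j)=\delta_{i,j}-\delta_{i,j+1}$: (QQ1) $\mathsf K_i\mathsf K_i^{-1}=\mathsf K_i^{-1}\mathsf K_i=1$, $\mathsf K_i\mathsf K_j=\mathsf K_j\mathsf K_i$, $\mathsf K_i\mathsf K_{\bar j}=\mathsf K_{\bar j}\mathsf K_i$, $\mathsf K_{\bar i}\mathsf K_{\bar j}+\mathsf K_{\bar j}\mathsf K_{\bar i}=2\delta_{i,j}\frac{\mathsf K_i^2-\mathsf K_i^{-2}}{v^2-v^{-2}}$. (QQ2) $\mathsf K_i\mathsf E_j=v^{(\epsilon_i,\alpha_j)}\mathsf E_j\mathsf K_i$, $\mathsf K_i\mathsf E_{\bar j}=v^{(\epsilon_i,\alpha_j)}\mathsf E_{\bar j}\mathsf K_i$, $\mathsf K_i\mathsf F_j=v^{-(\epsilon_i,\alpha_j)}\mathsf F_j\mathsf K_i$, $\mathsf K_i\mathsf F_{\bar j}=v^{-(\epsilon_i,\alpha_j)}\mathsf F_{\bar j}\mathsf K_i$. (QQ3) $\mathsf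 K_{\bar i}\mathsf E_i-v\mathsf E_i\mathsf K_{\bar i}=\mathsf E_{\bar i}\mathsf K_i^{-1}$, $v\mathsf K_{\bar i}\mathsf E_{i-1}-\mathsf E_{i-1}\mathsf K_{\bar i}=-\mathsf K_i^{-1}\mathsf E_{\overline{i-1}}$, $\mathsf K_{\bar i}\mathsf F_i-v\mathsf F_i\mathsf K_{\bar i}=-\mathsf F_{\bar i}\mathsf K_i$, $v\mathsf K_{\bar i}\mathsf F_{i-1}-\mathsf F_{i-1}\mathsf K_{\bar i}=\mathsf K_i\mathsf F_{\overline{i-1}}$, $\mathsf K_{\bar i}\mathsf E_{\bar i}+v\mathsf E_{\bar i}\mathsf K_{\bar i}=\mathsf E_i\mathsf K_i^{-1}$, $v\mathsf K_{\bar i}\mathsf E_{\overline{i-1}}+\mathsf E_{\overline{i-1}}\mathsf K_{\bar i}=\mathsf K_i^{-1}\mathsf E_{i-1}$, $\mathsf K_{\bar i}\mathsf F_{\bar i}+v\mathsf F_{\bar i}\mathsf K_{\bar i}=\mathsf F_i\mathsf K_i$, $v\mathsf K_{\bar i}\mathsf F_{\overline{i-1}}+\mathsf F_{\overline{i-1}}\mathsf K_{\bar i}=\mathsf K_i\mathsf F_{i-1}$, and for $j\ne i,i-1$: $\mathsf K_{\bar i}\mathsf E_j=\mathsf E_j\mathsf K_{\bar i}$, $\mathsf K_{\bar i}\mathsf F_j=\mathsf F_j\mathsf K_{\bar i}$, $\mathsf K_{\bar i}\mathsf E_{\bar j}=-\mathsf E_{\bar j}\mathsf K_{\bar i}$,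 $\mathsf K_{\bar i}\mathsf F_{\bar j}=-\mathsf F_{\bar j}\mathsf K_{\bar i}$. (QQ4) $\mathsf E_i\mathsf F_j-\mathsf F_j\mathsf E_i=\delta_{i,j}\frac{\mathsf K_i\mathsf K_{i+1}^{-1}-\mathsf K_i^{-1}\mathsf K_{i+1}}{v-v^{-1}}$, $\mathsf E_{\bar i}\mathsf F_{\bar j}+\mathsf F_{\bar j}\mathsf E_{\bar i}=\delta_{i,j}\big(\frac{\mathsf K_i\mathsf K_{i+1}-\mathsf K_i^{-1}\mathsf K_{i+1}^{-1}}{v-v^{-1}}+(v-v^{-1})\mathsf K_{\bar i}\mathsf K_{\overline{i+1}}\big)$, $\mathsf E_i\mathsf F_{\bar j}-\mathsf F_{\bar j}\mathsf E_i=\delta_{i,j}(\mathsf K_{i+1}^{-1}\mathsf K_{\bar i}-\mathsf K_{\overline{i+1}}\mathsf K_i^{-1})$, $\mathsf E_{\bar i}\mathsf F_j-\mathsf F_j\mathsf E_{\bar i}=\delta_{i,j}(\mathsf K_{i+1}\mathsf K_{\bar i}-\mathsf K_{\overline{i+1}}\mathsf K_i)$. (QQ5) $\mathsf E_{\bar i}^2=-\frac{v-v^{-1}}{v+v^{-1}}\mathsf E_i^2$, $\mathsf F_{\bar i}^2=\frac{v-v^{-1}}{v+v^{-1}}\mathsf F_i^2$; for $|i-j|\ne1$: $\mathsf E_i\mathsf E_{\bar j}=\mathsf E_{\bar j}\mathsf E_i$, $\mathsf F_i\mathsf F_{\bar j}=\mathsf F_{\bar j}\mathsf F_i$; for $|i-j|>1$: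 $\mathsf E_i\mathsf E_j=\mathsf E_j\mathsf E_i$, $\mathsf F_i\mathsf F_j=\mathsf F_j\mathsf F_i$, $\mathsf E_{\bar i}\mathsf E_{\bar j}=-\mathsf E_{\bar j}\mathsf E_{\bar i}$, $\mathsf F_{\bar i}\mathsf F_{\bar j}=-\mathsf F_{\bar j}\mathsf F_{\bar i}$; $\mathsf E_i\mathsf E_{i+1}-v\mathsf E_{i+1}\mathsf E_i=\mathsf E_{\bar i}\mathsf E_{\overline{i+1}}+v\mathsf E_{\overline{i+1}}\mathsf E_{\bar i}$, $\mathsf E_i\mathsf E_{\overline{i+1}}-v\mathsf E_{\overline{i+1}}\mathsf E_i=\mathsf E_{\bar i}\mathsf E_{i+1}-v\mathsf E_{i+1}\mathsf E_{\bar i}$, $\mathsf F_i\mathsf F_{i+1}-v\mathsf F_{i+1}\mathsf F_i=-(\mathsf F_{\bar i}\mathsf F_{\overline{i+1}}+v\mathsf F_{\overline{i+1}}\mathsf F_{\bar i})$, $\mathsf F_i\mathsf F_{\overline{i+1}}-v\mathsf F_{\overline{i+1}}\mathsf F_i=\mathsf F_{\bar i}\mathsf F_{i+1}-v\mathsf F_{i+1}\mathsf F_{\bar i}$. (QQ6) for $|i-j|=1$: $\mathsf E_i^2X-(v+v^{-1})\mathsf E_iX\mathsf E_i+X\mathsf E_i^2=0$ for $X\in\{\mathsf E_j,\mathsf E_{\bar j}\}$ and $\mathsf F_i^2Y-(v+v^{-1})\mathsf F_iY\mathsf F_i+Y\mathsf F_i^2=0$ for $Y\in\{\mathsf F_j,\mathsf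 F_{\bar j}\}$. Notation: $[m]_v=\frac{v^m-v^{-m}}{v-v^{-1}}$, $[m]_v^!=[m]_v[m-1]_v\cdots[1]_v$, $[0]_v^!=1$, and $X^{(m)}=X^m/[m]_v^!$ for $m\ge0$. ${\boldsymbol U}_{v,\mathcal Z}$ denotes the $\mathbb Z[v,v^{-1}]$-subsuperalgebra of ${\boldsymbol U}_{v}(\mathfrak q_n)$ generated by $\mathsf K_i^{\pm1}$, $\prod_{s=1}^t\frac{\mathsf K_iv^{1-s}-\mathsf K_i^{-1}v^{s-1}}{v^s-v^{-s}}$, $\mathsf K_{\bar i}$, $\mathsf E_j^{(m)},\mathsf F_j^{(m)},\mathsf E_{\bar j},\mathsf F_{\bar j}$. *)

theory Defs
  imports "HOL-Computational_Algebra.Polynomial" "HOL-Computational_Algebra.Fraction_Field"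
begin

type_synonym qv = "rat poly fract"

definition vq :: qv where "vq = Fract [:0, 1:] 1"

definition qint :: "nat \<Rightarrow> qv" where
  "qint m = (vq ^ m - inverse vq ^ m) / (vq - inverse vq)"

definition qfact :: "nat \<Rightarrow> qv" where
  "qfact m = (\<Prod>k=1..m. qint k)"

text \<open>(epsilon_i, alpha_j) = delta_{i,j} - delta_{i,j+1}\<close>
definition epal :: "nat \<Rightarrow> nat \<Rightarrow> int" where
  "epal i j = (if i = j then 1 else 0) - (if i = j + 1 then 1 else 0)"

definition qv_algebra :: "(qv \<Rightarrow> 'a::ring_1) \<Rightarrow> bool" where
  "qv_algebra sc \<longleftrightarrow> sc 1 = 1 \<and> (\<forall>x y. sc (x + y) = sc x + sc y)
     \<and> (\<forall>x y. sc (x * y) = sc x * sc y) \<and> (\<forall>x a. sc x * a = a * sc x)"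

definition dpow :: "(qv \<Rightarrow> 'a::ring_1) \<Rightarrow> 'a \<Rightarrow> int \<Rightarrow> 'a" where
  "dpow sc X k = (if k < 0 then 0 else sc (inverse (qfact (nat k))) * X ^ nat k)"

text \<open>The defining relations (QQ1)-(QQ6) of U_v(q_n) for elements
  K i, Ki i (= K_i^{-1}), Kb i (= K_{bar i}), E j, F j, Eb j, Fb j of a Q(v)-algebra.\<close>
definition qq_rels :: "nat \<Rightarrow> (qv \<Rightarrow> 'a::ring_1) \<Rightarrow> (nat \<Rightarrow> 'a) \<Rightarrow> (nat \<Rightarrow> 'a) \<Rightarrow> (nat \<Rightarrow> 'a)
   \<Rightarrow> (nat \<Rightarrow> 'a) \<Rightarrow> (nat \<Rightarrow> 'a) \<Rightarrow> (nat \<Rightarrow> 'a) \<Rightarrow> (nat \<Rightarrow> 'a) \<Rightarrow> bool" where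
  "qq_rels n sc K Ki Kb E F Eb Fb \<longleftrightarrow>
   \<comment> \<open>QQ1\<close>
   (\<forall>i\<in>{1..n}. K i * Ki i = 1 \<and> Ki i * K i = 1) \<and>
   (\<forall>i\<in>{1..n}. \<forall>j\<in>{1..n}. K i * K j = K j * K i \<and> K i * Kb j = Kb j * K i \<and>
      Kb i * Kb j + Kb j * Kb i =
        (if i = j then sc (2 / (vq ^ 2 - inverse vq ^ 2)) * (K i ^ 2 - Ki i ^ 2) else 0)) \<and>
   \<comment> \<open>QQ2\<close>
   (\<forall>i\<in>{1..n}. \<forall>j\<in>{1..n-1}.
      K i * E j = sc (vq powi epal i j) * E j * K i \<and>
      K i * Eb j = sc (vq powi epal i j) * Eb j * K i \<and>
      K i * F j = sc (vq powi (- epal i j)) * F j * K i \<and>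
      K i * Fb j = sc (vq powi (- epal i j)) * Fb j * K i) \<and>
   \<comment> \<open>QQ3\<close>
   (\<forall>i\<in>{1..n-1}.
      Kb i * E i - sc vq * E i * Kb i = Eb i * Ki i \<and>
      Kb i * F i - sc vq * F i * Kb i = - (Fb i * K i) \<and>
      Kb i * Eb i + sc vq * Eb i * Kb i = E i * Ki i \<and>
      Kb i * Fb i + sc vq * Fb i * Kb i = F i * K i) \<and>
   (\<forall>i\<in>{2..n}.
      sc vq * Kb i * E (i - 1) - E (i - 1) * Kb i = - (Ki i * Eb (i - 1)) \<and>
      sc vq * Kb i * F (i - 1) - F (i - 1) * Kb i = K i * Fb (i - 1) \<and>
      sc vq * Kb i * Eb (i - 1) + Eb (i - 1) * Kb i = Ki i * E (i - 1) \<and>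
      sc vq * Kb i * Fb (i - 1) + Fb (i - 1) * Kb i = K i * F (i - 1)) \<and>
   (\<forall>i\<in>{1..n}. \<forall>j\<in>{1..n-1}. j \<noteq> i \<and> j + 1 \<noteq> i \<longrightarrow>
      Kb i * E j = E j * Kb i \<and> Kb i * F j = F j * Kb i \<and>
      Kb i * Eb j = - (Eb j * Kb i) \<and> Kb i * Fb j = - (Fb j * Kb i)) \<and>
   \<comment> \<open>QQ4\<close>
   (\<forall>i\<in>{1..n-1}. \<forall>j\<in>{1..n-1}.
      E i * F j - F j * E i =
        (if i = j then sc (1 / (vq - inverse vq)) * (K i * Ki (i + 1) - Ki i * K (i + 1)) else 0) \<and>
      Eb i * Fb j + Fb j * Eb i =
        (if i = j then sc (1 / (vq - inverse vq)) * (K i * K (i + 1) - Ki i * Ki (i + 1))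
                       + sc (vq - inverse vq) * Kb i * Kb (i + 1) else 0) \<and>
      E i * Fb j - Fb j * E i =
        (if i = j then Ki (i + 1) * Kb i - Kb (i + 1) * Ki i else 0) \<and>
      Eb i * F j - F j * Eb i =
        (if i = j then K (i + 1) * Kb i - Kb (i + 1) * K i else 0)) \<and>
   \<comment> \<open>QQ5\<close>
   (\<forall>i\<in>{1..n-1}.
      Eb i ^ 2 = - (sc ((vq - inverse vq) / (vq + inverse vq)) * E i ^ 2) \<and>
      Fb i ^ 2 = sc ((vq - inverse vq) / (vq + inverse vq)) * F i ^ 2) \<and>
   (\<forall>i\<in>{1..n-1}. \<forall>j\<in>{1..n-1}. i \<noteq> j + 1 \<and> j \<noteq> i + 1 \<longrightarrow>
      E i * Eb j = Eb j * E i \<and> F i * Fb j = Fb j * F i) \<and>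
   (\<forall>i\<in>{1..n-1}. \<forall>j\<in>{1..n-1}. i + 1 < j \<or> j + 1 < i \<longrightarrow>
      E i * E j = E j * E i \<and> F i * F j = F j * F i \<and>
      Eb i * Eb j = - (Eb j * Eb i) \<and> Fb i * Fb j = - (Fb j * Fb i)) \<and>
   (\<forall>i. 1 \<le> i \<and> i + 1 \<le> n - 1 \<longrightarrow>
      E i * E (i + 1) - sc vq * E (i + 1) * E i = Eb i * Eb (i + 1) + sc vq * Eb (i + 1) * Eb i \<and>
      E i * Eb (i + 1) - sc vq * Eb (i + 1) * E i = Eb i * E (i + 1) - sc vq * E (i + 1) * Eb i \<and>
      F i * F (i + 1) - sc vq * F (i + 1) * F i = - (Fb i * Fb (i + 1) + sc vq * Fb (i + 1) * Fb i) \<and>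
      F i * Fb (i + 1) - sc vq * Fb (i + 1) * F i = Fb i * F (i + 1) - sc vq * F (i + 1) * Fb i) \<and>
   \<comment> \<open>QQ6\<close>
   (\<forall>i\<in>{1..n-1}. \<forall>j\<in>{1..n-1}. i = j + 1 \<or> j = i + 1 \<longrightarrow>
      (\<forall>X\<in>{E j, Eb j}. E i ^ 2 * X - sc (vq + inverse vq) * E i * X * E i + X * E i ^ 2 = 0) \<and>
      (\<forall>Y\<in>{F j, Fb j}. F i ^ 2 * Y - sc (vq + inverse vq) * F i * Y * F i + Y * F i ^ 2 = 0))"

end

theory Submission
  imports Defs
begin


lemma vq_pow: "vq ^ k = Fract ([:0,1:] ^ k) 1"
  by (induct k) (simp_all add: vq_def One_fract_def)

lemma vq_pow_ne1: "k > 0 \<Longrightarrow> vq ^ k \<noteq> 1"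
proof
  assume k: "k > 0" and h: "vq ^ k = 1"
  then have "([:0,1:] :: rat poly) ^ k = 1"
    by (simp add: vq_pow One_fract_def eq_fract)
  then have "degree (([:0,1:] :: rat poly) ^ k) = 0" by simp
  moreover have "degree (([:0,1:] :: rat poly) ^ k) = k"
    by (subst degree_power_eq) auto
  ultimately show False using k by simp
qed

lemma vq_ne0: "vq \<noteq> 0"
  by (simp add: vq_def Zero_fract_def eq_fract)

lemma vq_inv_pow_ne: "k > 0 \<Longrightarrow> vq ^ k - inverse vq ^ k \<noteq> 0"
proof
  assume k: "k > 0" and h: "vq ^ k - inverse vq ^ k = 0"
  then have "vq ^ k * vq ^ k = inverse vq ^ k * vq ^ k" by simp
  also have "\<dots> = 1" using vq_ne0 by (simp add: power_inverse[symmetric] field_simps)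
  finally have "vq ^ (2*k) = 1" by (simp add: power_add[symmetric] mult_2)
  thus False using vq_pow_ne1[of "2*k"] k by simp
qed

lemma vq_d_ne: "vq - inverse vq \<noteq> 0"
  using vq_inv_pow_ne[of 1] by simp

lemma qint_ne: "qint (Suc k) \<noteq> 0"
  unfolding qint_def using vq_inv_pow_ne[of "Suc k"] vq_d_ne by simp

lemma qfact_Suc: "qfact (Suc k) = qfact k * qint (Suc k)"
  unfolding qfact_def by simp

lemma qfact_ne: "qfact k \<noteq> 0"
  by (induct k) (auto simp: qfact_Suc qint_ne, simp add: qfact_def)

lemma qint_Suc: "qint (Suc (Suc k)) = vq * qint (Suc k) + inverse vq ^ (Suc k)"
  unfolding qint_def using vq_d_ne vq_ne0
  by (simp add: field_simps)

lemma qint_Suc2: "qint (Suc (Suc k)) = inverse vq * qint (Suc k) + vq ^ (Suc k)"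
  unfolding qint_def using vq_d_ne vq_ne0
  by (simp add: field_simps)


lemma qint_0: "qint 0 = 0" by (simp add: qint_def)
lemma qint_1: "qint 1 = 1" using vq_d_ne by (simp add: qint_def)

lemma vw_pow: "vq ^ k * inverse vq ^ k = 1"
  using vq_ne0 by (simp add: power_inverse[symmetric] field_simps)

lemma qint_rec3: "qint (Suc (Suc k)) = vq^(Suc k) + inverse vq^(Suc k) + qint k"
proof -
  have "(vq - inverse vq) * (vq^(Suc k) + inverse vq^(Suc k) + qint k) = vq ^ Suc (Suc k) - inverse vq ^ Suc (Suc k)"
  proof -
    have "(vq - inverse vq) * qint k = vq^k - inverse vq^k" unfolding qint_def using vq_d_ne by simp
    moreover have "(vq - inverse vq) * (vq^(Suc k) + inverse vq^(Suc k)) = vq ^ Suc (Suc k) - inverse vq ^ Suc (Suc k) + inverse vq ^ k - vq^k"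
      using vq_ne0 by (simp add: algebra_simps) (simp add: power_inverse[symmetric] field_simps)
    ultimately show ?thesis by (simp add: distrib_left)
  qed
  thus ?thesis unfolding qint_def[of "Suc (Suc k)"] using vq_d_ne by (simp add: field_simps)
qed

lemma rec_a: "vq^(Suc k) * qint (Suc (Suc k)) = 1 + vq*vq * (vq^k * qint (Suc k))"
  unfolding qint_Suc using vw_pow[of "Suc k"] by (simp add: algebra_simps)

lemma rec_b: "inverse vq^(Suc k) * qint (Suc (Suc k)) = 1 + inverse vq * inverse vq * (inverse vq^k * qint (Suc k))"
  unfolding qint_Suc2 using vw_pow[of "Suc k"] by (simp add: algebra_simps)

lemma rec_c: "qint (Suc (Suc k)) * qint (Suc k) = vq * (vq^k*qint (Suc k)) + inverse vq * (inverse vq^k * qint (Suc k)) + qint (Suc k) * qint k"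
  unfolding qint_rec3 by (simp add: algebra_simps)

lemma co_a: "inverse (qfact (Suc k)) * (vq^k * qint (Suc k)) = vq^k * inverse (qfact k)"
  using qint_ne[of k] qfact_ne[of k] by (simp add: qfact_Suc field_simps)
lemma co_b: "inverse (qfact (Suc k)) * (inverse vq^k * qint (Suc k)) = inverse vq^k * inverse (qfact k)"
  using qint_ne[of k] qfact_ne[of k] by (simp add: qfact_Suc field_simps)
lemma co_c: "inverse (qfact (Suc (Suc k))) * (qint (Suc (Suc k)) * qint (Suc k)) = inverse (qfact k)"
  using qint_ne[of k] qint_ne[of "Suc k"] qfact_ne[of k] by (simp add: qfact_Suc field_simps)
lemma co_d: "inverse (qfact (Suc k)) * qint (Suc k) = inverse (qfact k)"
  using qint_ne[of k] qfact_ne[of k] by (simp add: qfact_Suc field_simps)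



definition smul :: "(qv \<Rightarrow> 'a::ring_1) \<Rightarrow> qv \<Rightarrow> 'a \<Rightarrow> 'a" where
  "smul sc c x = sc c * x"

context fixes sc :: "qv \<Rightarrow> 'a::ring_1" assumes alg: "qv_algebra sc"
begin

lemma sc_add: "sc (x + y) = sc x + sc y" using alg unfolding qv_algebra_def by blast
lemma sc_mult: "sc (x * y) = sc x * sc y" using alg unfolding qv_algebra_def by blast
lemma sc_central: "sc x * a = a * sc x" using alg unfolding qv_algebra_def by blast
lemma sc_1: "sc 1 = 1" using alg unfolding qv_algebra_def by blast
lemma sc_0: "sc 0 = 0" using sc_add[of 0 0] by simp
lemma sc_uminus: "sc (- x) = - sc x"
proof -
  have "sc x + sc (- x) = 0" using sc_add[of x "-x"] sc_0 by simp
  thus ?thesis using minus_unique by metis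
qed
lemma sc_diff: "sc (x - y) = sc x - sc y" using sc_add[of x "-y"] sc_uminus by simp

lemma smul_left: "smul sc c x * y = smul sc c (x * y)" by (simp add: smul_def mult.assoc)
lemma smul_right: "x * smul sc c y = smul sc c (x * y)"
  unfolding smul_def by (metis mult.assoc sc_central)
lemma smul_smul: "smul sc c (smul sc d x) = smul sc (c * d) x"
  by (simp add: smul_def mult.assoc sc_mult)
lemma smul_add_r: "smul sc c (x + y) = smul sc c x + smul sc c y" by (simp add: smul_def algebra_simps)
lemma smul_diff_r: "smul sc c (x - y) = smul sc c x - smul sc c y" by (simp add: smul_def algebra_simps)
lemma smul_minus_r: "smul sc c (- x) = - smul sc c x" by (simp add: smul_def)
lemma smul_add_l: "smul sc (c + d) x = smul sc c x + smul sc d x" by (simp add: smul_def sc_add algebra_simps)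
lemma smul_diff_l: "smul sc (c - d) x = smul sc c x - smul sc d x" by (simp add: smul_def sc_diff algebra_simps)
lemma smul_minus_l: "smul sc (- c) x = - smul sc c x" by (simp add: smul_def sc_uminus)
lemma smul_1: "smul sc 1 x = x" by (simp add: smul_def sc_1)
lemma smul_0: "smul sc 0 x = 0" by (simp add: smul_def sc_0)
lemma smul_x0: "smul sc c 0 = 0" by (simp add: smul_def)

lemmas smul_simps = smul_left smul_right smul_smul smul_add_r smul_diff_r smul_minus_r
  smul_add_l smul_diff_l smul_minus_l smul_1 smul_0 smul_x0

lemma core1:
  assumes h0: "Eb*F = F*Eb + P - Q"
  and hP: "P*F = smul sc x2 (F*P) - smul sc x1 (R*Fb)"
  and hQ: "Q*F = smul sc y2 (F*Q) + smul sc y1 (R*Fb)"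
  and hR: "R*F = F*R" and hFb: "Fb*F = F*Fb"
  and ra: "a 0 = 1" "\<And>k. a (Suc k) = 1 + x2 * a k"
  and rb: "b 0 = 1" "\<And>k. b (Suc k) = 1 + y2 * b k"
  and rc: "c 0 = 0" "\<And>k. c (Suc k) = x1 * a k + y1 * b k + c k"
  shows "Eb * F^(Suc k) = F^(Suc k)*Eb + smul sc (a k) (F^k*P) - smul sc (b k) (F^k*Q)
           - smul sc (c k) (F^(k-1)*(R*Fb))"
proof (induct k)
  case 0
  then show ?case using h0 ra rb rc by (simp add: smul_simps)
next
  case (Suc k)
  have pw: "\<And>X. F^k*(F*X) = F^(Suc k)*X" "\<And>X. F^(Suc k)*(F*X) = F^(Suc (Suc k))*X"
    by (simp_all only: power_Suc2 mult.assoc)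
  have t3: "smul sc (c k) (F^(k-1)*(R*Fb)) * F = smul sc (c k) (F^k*(R*Fb))"
  proof (cases k)
    case 0 then show ?thesis using rc by (simp add: smul_simps)
  next
    case (Suc j)
    have c1: "R*(Fb*F) = F*(R*Fb)" by (simp add: hFb mult.assoc[symmetric] hR)
    have "F^(k-1)*(R*Fb)*F = F^j*(R*(Fb*F))" using Suc by (simp add: mult.assoc)
    also have "\<dots> = (F^j*F)*(R*Fb)" unfolding c1 by (simp add: mult.assoc)
    also have "\<dots> = F^k*(R*Fb)" using Suc by (simp only: power_Suc2)
    finally show ?thesis by (simp add: smul_left)
  qed
  have "Eb * F^(Suc (Suc k)) = (Eb * F^(Suc k)) * F" by (simp only: power_Suc2 mult.assoc)
  also have "\<dots> = F^(Suc k)*(Eb*F) + smul sc (a k) (F^k*(P*F)) - smul sc (b k) (F^k*(Q*F))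
           - smul sc (c k) (F^(k-1)*(R*Fb)) * F"
    unfolding Suc by (simp only: distrib_right left_diff_distrib smul_left mult.assoc)
  also have "\<dots> = F^(Suc (Suc k))*Eb + F^(Suc k)*P - F^(Suc k)*Q
      + smul sc (a k) (smul sc x2 (F^(Suc k)*P) - smul sc x1 (F^k*(R*Fb)))
      - smul sc (b k) (smul sc y2 (F^(Suc k)*Q) + smul sc y1 (F^k*(R*Fb)))
      - smul sc (c k) (F^k*(R*Fb))"
    unfolding h0 hP hQ t3 by (simp only: distrib_left right_diff_distrib smul_right pw smul_diff_r smul_add_r mult.assoc[symmetric] power_Suc2[symmetric])
  also have "\<dots> = F^(Suc (Suc k))*Eb + smul sc (a (Suc k)) (F^(Suc k)*P) - smul sc (b (Suc k)) (F^(Suc k)*Q)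
           - smul sc (c (Suc k)) (F^(Suc k - 1)*(R*Fb))"
    by (simp add: ra rb rc smul_simps algebra_simps)
  finally show ?case .
qed


lemma core2:
  assumes h0: "E*Fb = Fb*E + P - Q"
  and hP: "P*E = smul sc x2 (E*P) + smul sc x1 R"
  and hQ: "Q*E = smul sc y2 (E*Q) - smul sc y1 R"
  and hR: "R*E = E*R"
  and ra: "a 0 = 1" "\<And>k. a (Suc k) = 1 + x2 * a k"
  and rb: "b 0 = 1" "\<And>k. b (Suc k) = 1 + y2 * b k"
  and rc: "c 0 = 0" "\<And>k. c (Suc k) = x1 * a k + y1 * b k + c k"
  shows "E^(Suc k) * Fb = Fb*E^(Suc k) + smul sc (a k) (E^k*P) - smul sc (b k) (E^k*Q)
           + smul sc (c k) (E^(k-1)*R)"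
proof (induct k)
  case 0
  then show ?case using h0 ra rb rc by (simp add: smul_simps)
next
  case (Suc k)
  have pw: "\<And>X. E^k*(E*X) = E^(Suc k)*X" "\<And>X. E^(Suc k)*(E*X) = E^(Suc (Suc k))*X"
    by (simp_all only: power_Suc2 mult.assoc)
  have t3: "smul sc (c k) (E^(k-1)*R) * E = smul sc (c k) (E^k*R)"
  proof (cases k)
    case 0 then show ?thesis using rc by (simp add: smul_simps)
  next
    case (Suc j)
    have "E^(k-1)*R*E = E^j*(R*E)" using Suc by (simp add: mult.assoc)
    also have "\<dots> = (E^j*E)*R" unfolding hR by (simp add: mult.assoc)
    also have "\<dots> = E^k*R" using Suc by (simp only: power_Suc2)
    finally show ?thesis by (simp add: smul_left)
  qed
  have "E^(Suc (Suc k)) * Fb = E^(Suc k) * (E * Fb)" by (simp only: power_Suc2 power_Suc mult.assoc)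
  also have "\<dots> = (E^(Suc k) * Fb) * E + E^(Suc k)*P - E^(Suc k)*Q"
    unfolding h0 by (simp only: distrib_left right_diff_distrib mult.assoc power_Suc2)
  also have "\<dots> = Fb*(E^(Suc k)*E) + smul sc (a k) (E^k*(P*E)) - smul sc (b k) (E^k*(Q*E))
           + smul sc (c k) (E^(k-1)*R) * E + E^(Suc k)*P - E^(Suc k)*Q"
    unfolding Suc by (simp only: distrib_right left_diff_distrib smul_left mult.assoc)
  also have "\<dots> = Fb*E^(Suc (Suc k)) + E^(Suc k)*P - E^(Suc k)*Q
      + smul sc (a k) (smul sc x2 (E^(Suc k)*P) + smul sc x1 (E^k*R))
      - smul sc (b k) (smul sc y2 (E^(Suc k)*Q) - smul sc y1 (E^k*R))
      + smul sc (c k) (E^k*R)"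
    unfolding hP hQ t3 by (simp only: distrib_left right_diff_distrib smul_right pw smul_diff_r smul_add_r
       mult.assoc[symmetric] power_Suc2[symmetric] algebra_simps)
  also have "\<dots> = Fb*E^(Suc (Suc k)) + smul sc (a (Suc k)) (E^(Suc k)*P) - smul sc (b (Suc k)) (E^(Suc k)*Q)
           + smul sc (c (Suc k)) (E^(Suc k - 1)*R)"
    by (simp add: ra rb rc smul_simps algebra_simps)
  finally show ?case .
qed

lemma core3:
  assumes h0: "Eb*G = smul sc v (G*Eb) + Y"
  and hY: "Y*G = smul sc w (G*Y)"
  and rd: "d 0 = 1" "\<And>k. d (Suc k) = v^(Suc k) + w * d k"
  shows "Eb*G^(Suc k) = smul sc (v^(Suc k)) (G^(Suc k)*Eb) + smul sc (d k) (G^k*Y)"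
proof (induct k)
  case 0
  then show ?case using h0 rd by (simp add: smul_simps)
next
  case (Suc k)
  have pw: "\<And>X. G^k*(G*X) = G^(Suc k)*X" "\<And>X. G^(Suc k)*(G*X) = G^(Suc (Suc k))*X"
    by (simp_all only: power_Suc2 mult.assoc)
  have "Eb*G^(Suc (Suc k)) = (Eb*G^(Suc k))*G" by (simp only: power_Suc2 mult.assoc)
  also have "\<dots> = smul sc (v^(Suc k)) (G^(Suc k)*(Eb*G)) + smul sc (d k) (G^k*(Y*G))"
    unfolding Suc by (simp only: distrib_right smul_left mult.assoc)
  also have "\<dots> = smul sc (v^(Suc k)) (smul sc v (G^(Suc (Suc k))*Eb) + G^(Suc k)*Y)
       + smul sc (d k) (smul sc w (G^(Suc k)*Y))"
    unfolding h0 hY by (simp only: distrib_left smul_right pw)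
  also have "\<dots> = smul sc (v^(Suc (Suc k))) (G^(Suc (Suc k))*Eb) + smul sc (d (Suc k)) (G^(Suc k)*Y)"
    by (simp add: rd smul_simps algebra_simps)
  finally show ?case .
qed


lemma inv_rel:
  assumes "K*Ki = 1" "Ki*K = 1" "K*X = smul sc c (X*K)" "c \<noteq> 0"
  shows "Ki*X = smul sc (inverse c) (X*Ki)"
proof -
  have xk: "X*K = smul sc (inverse c) (K*X)"
    using assms(3,4) by (simp add: smul_smul smul_1)
  have "Ki*X = Ki*X*(K*Ki)" using assms(1) by simp
  also have "\<dots> = Ki*(X*K)*Ki" by (simp add: mult.assoc)
  also have "\<dots> = smul sc (inverse c) ((Ki*K)*X*Ki)" unfolding xk
    by (simp add: smul_left smul_right mult.assoc)
  also have "\<dots> = smul sc (inverse c) (X*Ki)" using assms(2) by simp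
  finally show ?thesis .
qed

lemma inv_comm:
  fixes K Ki X :: 'a
  assumes "K*Ki = 1" "Ki*K = 1" "K*X = X*K"
  shows "Ki*X = X*Ki"
  using inv_rel[of K Ki X 1] assms by (simp add: smul_1)

end


lemma dp0: "dpow sc X (int m) = smul sc (inverse (qfact m)) (X^m)"
  by (simp add: dpow_def smul_def)
lemma dp1: "dpow sc X (int (Suc k) - 1) = smul sc (inverse (qfact k)) (X^k)"
  by (simp add: dpow_def smul_def)
lemma dp2: "dpow sc X (int (Suc k) - 2) = (if k = 0 then 0 else smul sc (inverse (qfact (k - 1))) (X^(k - 1)))"
  by (simp add: dpow_def smul_def nat_diff_distrib')

lemma pw1: "vq powi (int (Suc k) - 1) = vq ^ k" by simp
lemma pw2: "vq powi (1 - int (Suc k)) = inverse vq ^ k"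
  by (simp add: power_int_minus power_inverse)
lemma pw3: "vq powi (- int (Suc k) + 1) = inverse vq ^ k"
  using pw2[of k] by (simp add: add.commute)

lemma rearr: "(a::'a::ab_group_add) - b = c \<Longrightarrow> a = b + c" by (simp add: algebra_simps)
lemma rearr2: "(a::'a::ab_group_add) - b = c \<Longrightarrow> b = a - c" by (simp add: algebra_simps)

theorem lemma5p1:
  fixes n i m :: nat
    and sc :: "qv \<Rightarrow> 'a::ring_1"
    and K Ki Kb E F Eb Fb :: "nat \<Rightarrow> 'a"
  assumes alg: "qv_algebra sc"
    and rels: "qq_rels n sc K Ki Kb E F Eb Fb"
    and i: "1 \<le> i" "i \<le> n - 1"
    and m: "m \<ge> 1"
  shows
    "(Eb i * dpow sc (F i) (int m)
       = dpow sc (F i) (int m) * Eb i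
         - sc (vq powi (1 - int m)) * dpow sc (F i) (int m - 1) * K i * Kb (i + 1)
         + sc (vq powi (int m - 1)) * dpow sc (F i) (int m - 1) * Kb i * K (i + 1)
         - dpow sc (F i) (int m - 2) * K i * K (i + 1) * Fb i)
    \<and> (dpow sc (E i) (int m) * Fb i
       = Fb i * dpow sc (E i) (int m)
         + sc (vq powi (int m - 1)) * dpow sc (E i) (int m - 1) * Kb i * Ki (i + 1)
         - sc (vq powi (- int m + 1)) * dpow sc (E i) (int m - 1) * Kb (i + 1) * Ki i
         + dpow sc (E i) (int m - 2) * Eb i * Ki (i + 1) * Ki i)
    \<and> (i \<le> n - 2 \<longrightarrow>
     Eb i * dpow sc (E (i + 1)) (int m)
       = sc (vq ^ m) * dpow sc (E (i + 1)) (int m) * Eb i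
         + dpow sc (E (i + 1)) (int m - 1) * (E i * Eb (i + 1) - sc vq * Eb (i + 1) * E i))"
proof -
  obtain k where mk: "m = Suc k" using m by (cases m) auto
  define j where "j = i + 1"
  define v where "v = vq"
  define w where "w = inverse vq"
  have vw: "v * w = 1" "w * v = 1" using vq_ne0 by (simp_all add: v_def w_def)
  note r = rels[unfolded qq_rels_def]
  note r1 = r[THEN conjunct1]
  note r2 = r[THEN conjunct2, THEN conjunct1]
  note r3 = r[THEN conjunct2, THEN conjunct2, THEN conjunct1]
  note r4 = r[THEN conjunct2, THEN conjunct2, THEN conjunct2, THEN conjunct1]
  note r5 = r[THEN conjunct2, THEN conjunct2, THEN conjunct2, THEN conjunct2, THEN conjunct1]
  note r7 = r[THEN conjunct2, THEN conjunct2, THEN conjunct2, THEN conjunct2, THEN conjunct2, THEN conjunct2, THEN conjunct1]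
  note r9 = r[THEN conjunct2, THEN conjunct2, THEN conjunct2, THEN conjunct2, THEN conjunct2, THEN conjunct2,
     THEN conjunct2, THEN conjunct2, THEN conjunct1]
  note r11 = r[THEN conjunct2, THEN conjunct2, THEN conjunct2, THEN conjunct2, THEN conjunct2, THEN conjunct2,
     THEN conjunct2, THEN conjunct2, THEN conjunct2, THEN conjunct2, THEN conjunct1]
  note r12 = r[THEN conjunct2, THEN conjunct2, THEN conjunct2, THEN conjunct2, THEN conjunct2, THEN conjunct2,
     THEN conjunct2, THEN conjunct2, THEN conjunct2, THEN conjunct2, THEN conjunct2]
  have iN: "i \<in> {1..n}" and jN: "j \<in> {1..n}" and iN1: "i \<in> {1..n-1}" and j2: "j \<in> {2..n}"
    using i by (auto simp: j_def)
  have jm1: "j - 1 = i" by (simp add: j_def)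
  have ep1: "epal i i = 1" and ep2: "epal j i = -1" by (simp_all add: epal_def j_def)
  have KiKi: "K i * Ki i = 1" "Ki i * K i = 1" using r1 iN by auto
  have KjKj: "K j * Ki j = 1" "Ki j * K j = 1" using r1 jN by auto
  have KK: "K i * K j = K j * K i" using r2 iN jN by blast
  have KKb1: "K j * Kb i = Kb i * K j" using r2 iN jN by blast
  have KKb2: "K i * Kb j = Kb j * K i" using r2 iN jN by blast
  have KKb3: "K i * Kb i = Kb i * K i" using r2 iN by blast
  have KKb4: "K j * Kb j = Kb j * K j" using r2 jN by blast
  have q2: "\<And>a. a \<in> {1..n} \<Longrightarrow> K a * E i = sc (vq powi epal a i) * E i * K a \<and>
      K a * Eb i = sc (vq powi epal a i) * Eb i * K a \<and>
      K a * F i = sc (vq powi (- epal a i)) * F i * K a \<and>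
      K a * Fb i = sc (vq powi (- epal a i)) * Fb i * K a" using r3 iN1 by blast
  have KjF: "K j * F i = smul sc v (F i * K j)" using q2[OF jN] ep2 by (simp add: smul_def v_def mult.assoc)
  have KiF: "K i * F i = smul sc w (F i * K i)" using q2[OF iN] ep1 by (simp add: smul_def w_def mult.assoc)
  have KjFb: "K j * Fb i = smul sc v (Fb i * K j)" using q2[OF jN] ep2 by (simp add: smul_def v_def mult.assoc)
  have KiFb: "K i * Fb i = smul sc w (Fb i * K i)" using q2[OF iN] ep1 by (simp add: smul_def w_def mult.assoc)
  have KjE: "K j * E i = smul sc w (E i * K j)" using q2[OF jN] ep2 by (simp add: smul_def w_def mult.assoc)
  have KiE: "K i * E i = smul sc v (E i * K i)" using q2[OF iN] ep1 by (simp add: smul_def v_def mult.assoc)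
  have KjEb: "K j * Eb i = smul sc w (Eb i * K j)" using q2[OF jN] ep2 by (simp add: smul_def w_def mult.assoc)
  have KiEb: "K i * Eb i = smul sc v (Eb i * K i)" using q2[OF iN] ep1 by (simp add: smul_def v_def mult.assoc)
  have g1: "Kb i * F i - sc vq * F i * Kb i = - (Fb i * K i)" "Kb i * E i - sc vq * E i * Kb i = Eb i * Ki i"
    using r4 iN1 by blast+
  have g2: "sc vq * Kb j * F i - F i * Kb j = K j * Fb i" "sc vq * Kb j * E i - E i * Kb j = - (Ki j * Eb i)"
    using r5 j2 jm1 by force+
  have g4: "Eb i * F i - F i * Eb i = K j * Kb i - Kb j * K i" "E i * Fb i - Fb i * E i = Ki j * Kb i - Kb j * Ki i"
    using r7 iN1 by (auto simp: j_def)
  have g5: "E i * Eb i = Eb i * E i" "F i * Fb i = Fb i * F i" using r9 iN1 by auto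
  have KbiF: "Kb i * F i = smul sc v (F i * Kb i) - Fb i * K i"
    using rearr[OF g1(1)] by (simp add: smul_def v_def mult.assoc)
  have KbiE: "Kb i * E i = smul sc v (E i * Kb i) + Eb i * Ki i"
    using rearr[OF g1(2)] by (simp add: smul_def v_def mult.assoc)
  have KbjF: "Kb j * F i = smul sc w (F i * Kb j) + smul sc w (K j * Fb i)"
  proof -
    have "smul sc v (Kb j * F i) = F i * Kb j + K j * Fb i"
      using rearr[OF g2(1)] by (simp add: smul_def v_def mult.assoc)
    hence "smul sc w (smul sc v (Kb j * F i)) = smul sc w (F i * Kb j + K j * Fb i)" by simp
    thus ?thesis using alg vw by (simp add: smul_smul smul_1 smul_add_r)
  qed
  have KbjE: "Kb j * E i = smul sc w (E i * Kb j) - smul sc w (Ki j * Eb i)"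
  proof -
    have "smul sc v (Kb j * E i) = E i * Kb j + - (Ki j * Eb i)"
      using rearr[OF g2(2)] by (simp add: smul_def v_def mult.assoc)
    hence "smul sc w (smul sc v (Kb j * E i)) = smul sc w (E i * Kb j + - (Ki j * Eb i))" by simp
    thus ?thesis using alg vw by (simp add: smul_smul smul_1 smul_add_r smul_minus_r smul_diff_r)
  qed
  note S = smul_simps[OF alg]
  have ctx: "\<And>a b c z::'a. a * b = c \<Longrightarrow> a * (b * z) = c * z" by (simp add: mult.assoc[symmetric])
  have ctx2: "\<And>a b z::'a. \<And>c. a * b = smul sc c (b * a) \<Longrightarrow> a * (b * z) = smul sc c (b * (a * z))"
    using alg by (simp add: mult.assoc[symmetric] smul_left)
  define P1 where "P1 = Kb i * K j"
  define Q1 where "Q1 = K i * Kb j"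
  define R1 where "R1 = K i * K j"
  have hFb1: "R1 * Fb i = Fb i * R1"
    unfolding R1_def by (simp add: mult.assoc KjFb KiFb[THEN ctx2] S vw)
  have h01: "Eb i * F i = F i * Eb i + P1 - Q1"
    using rearr[OF g4(1)] unfolding P1_def Q1_def by (simp add: KKb1 KKb2 algebra_simps)
  have hP1: "P1 * F i = smul sc (v*v) (F i * P1) - smul sc v (R1 * Fb i)"
    unfolding hFb1 unfolding P1_def R1_def 
    by (simp add: mult.assoc KjF KbiF[THEN ctx] S vw algebra_simps)
  have hQ1: "Q1 * F i = smul sc (w*w) (F i * Q1) + smul sc w (R1 * Fb i)"
    unfolding Q1_def R1_def 
    by (simp add: mult.assoc KbjF KiF[THEN ctx2] S vw algebra_simps)
  have hR1: "R1 * F i = F i * R1"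
    unfolding R1_def by (simp add: mult.assoc KjF KiF[THEN ctx2] S vw)
  have hFF: "Fb i * F i = F i * Fb i" using g5(2) by simp
  have C1: "Eb i * F i ^ Suc k = F i ^ Suc k * Eb i + smul sc (vq^k * qint (Suc k)) (F i ^ k * P1)
      - smul sc (inverse vq^k * qint (Suc k)) (F i ^ k * Q1) - smul sc (qint (Suc k) * qint k) (F i ^ (k - 1) * (R1 * Fb i))"
    using core1[OF alg h01 hP1 hQ1 hR1 hFF, of "\<lambda>k. vq^k * qint (Suc k)" "\<lambda>k. inverse vq^k * qint (Suc k)"
       "\<lambda>k. qint (Suc k) * qint k" k]
    by (simp only: qint_1 qint_1[unfolded One_nat_def] qint_0 v_def w_def rec_a rec_b rec_c power_0 mult_1 mult_1_right mult_zero_right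
         simp_thms)
  have sc_fold: "\<And>c x. sc c * x = smul sc c x" by (simp add: smul_def)
  have part1: "Eb i * dpow sc (F i) (int m)
       = dpow sc (F i) (int m) * Eb i
         - sc (vq powi (1 - int m)) * dpow sc (F i) (int m - 1) * K i * Kb (i + 1)
         + sc (vq powi (int m - 1)) * dpow sc (F i) (int m - 1) * Kb i * K (i + 1)
         - dpow sc (F i) (int m - 2) * K i * K (i + 1) * Fb i" (is "_ = ?R")
  proof -
    have "Eb i * dpow sc (F i) (int m) = smul sc (inverse (qfact (Suc k))) (Eb i * F i ^ Suc k)"
      unfolding mk dp0 by (simp add: S)
    also have "\<dots> = smul sc (inverse (qfact (Suc k))) (F i ^ Suc k * Eb i) + smul sc (vq^k * inverse (qfact k)) (F i ^ k * P1)
      - smul sc (inverse vq^k * inverse (qfact k)) (F i ^ k * Q1)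
      - smul sc (inverse (qfact (Suc k)) * (qint (Suc k) * qint k)) (F i ^ (k - 1) * (R1 * Fb i))"
      unfolding C1 by (simp only: S co_a co_b)
    also have "\<dots> = ?R"
    proof (cases k)
      case 0
      show ?thesis unfolding mk dp0 dp1 dp2 pw1 pw2 0 P1_def Q1_def R1_def j_def
        by (simp add: S sc_fold qint_0 mult.assoc algebra_simps)
    next
      case (Suc k')
      show ?thesis unfolding mk dp0 dp1 dp2 pw1 pw2 Suc P1_def Q1_def R1_def j_def
        by (simp only: co_c) (simp add: S sc_fold mult.assoc algebra_simps)
    qed
    finally show ?thesis .
  qed
  have vw3: "\<And>x. v * (w * x) = x" "\<And>x. w * (v * x) = x" using vw by (simp_all add: mult.assoc[symmetric])
  have iv: "inverse v = w" "inverse w = v" by (simp_all add: v_def w_def)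
  have vne: "v \<noteq> 0" "w \<noteq> 0" using vq_ne0 by (simp_all add: v_def w_def)
  have KijKb: "Ki j * Kb i = Kb i * Ki j" using inv_comm[OF alg KjKj KKb1] .
  have KiiKb: "Ki i * Kb j = Kb j * Ki i" using inv_comm[OF alg KiKi KKb2] .
  have KiKj: "Ki i * K j = K j * Ki i" using inv_comm[OF alg KiKi KK] .
  have KiiKij: "Ki i * Ki j = Ki j * Ki i" using inv_comm[OF alg KjKj KiKj[symmetric]] by simp
  have KijE: "Ki j * E i = smul sc v (E i * Ki j)" using inv_rel[OF alg KjKj KjE vne(2)] iv by simp
  have KiiE: "Ki i * E i = smul sc w (E i * Ki i)" using inv_rel[OF alg KiKi KiE vne(1)] iv by simp
  have KijEb: "Ki j * Eb i = smul sc v (Eb i * Ki j)" using inv_rel[OF alg KjKj KjEb vne(2)] iv by simp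
  have KiiEb: "Ki i * Eb i = smul sc w (Eb i * Ki i)" using inv_rel[OF alg KiKi KiEb vne(1)] iv by simp
  have EbE: "Eb i * E i = E i * Eb i" using g5(1) by simp
  define P2 where "P2 = Kb i * Ki j"
  define Q2 where "Q2 = Kb j * Ki i"
  define R2 where "R2 = Eb i * (Ki j * Ki i)"
  have h02: "E i * Fb i = Fb i * E i + P2 - Q2"
    using rearr[OF g4(2)] unfolding P2_def Q2_def by (simp add: KijKb algebra_simps)
  have hP2: "P2 * E i = smul sc (v*v) (E i * P2) + smul sc v R2"
    unfolding P2_def R2_def
    by (simp add: mult.assoc KijE KbiE[THEN ctx] KiiKij S vw algebra_simps)
  have hQ2: "Q2 * E i = smul sc (w*w) (E i * Q2) - smul sc w R2"
    unfolding Q2_def R2_def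
    by (simp add: mult.assoc KiiE KbjE[THEN ctx] KijEb[THEN ctx2] S vw vw3 algebra_simps)
  have hR2: "R2 * E i = E i * R2"
    unfolding R2_def by (simp add: mult.assoc KiiE KijE[THEN ctx2] EbE[THEN ctx] S vw vw3)
  have C2: "E i ^ Suc k * Fb i = Fb i * E i ^ Suc k + smul sc (vq^k * qint (Suc k)) (E i ^ k * P2)
      - smul sc (inverse vq^k * qint (Suc k)) (E i ^ k * Q2) + smul sc (qint (Suc k) * qint k) (E i ^ (k - 1) * R2)"
    using core2[OF alg h02 hP2 hQ2 hR2, of "\<lambda>k. vq^k * qint (Suc k)" "\<lambda>k. inverse vq^k * qint (Suc k)"
       "\<lambda>k. qint (Suc k) * qint k" k]
    by (simp only: qint_1 qint_1[unfolded One_nat_def] qint_0 v_def w_def rec_a rec_b rec_c power_0 mult_1 mult_1_right mult_zero_right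
         simp_thms)
  have part2: "dpow sc (E i) (int m) * Fb i
       = Fb i * dpow sc (E i) (int m)
         + sc (vq powi (int m - 1)) * dpow sc (E i) (int m - 1) * Kb i * Ki (i + 1)
         - sc (vq powi (- int m + 1)) * dpow sc (E i) (int m - 1) * Kb (i + 1) * Ki i
         + dpow sc (E i) (int m - 2) * Eb i * Ki (i + 1) * Ki i" (is "_ = ?R")
  proof -
    have "dpow sc (E i) (int m) * Fb i = smul sc (inverse (qfact (Suc k))) (E i ^ Suc k * Fb i)"
      unfolding mk dp0 by (simp add: S)
    also have "\<dots> = smul sc (inverse (qfact (Suc k))) (Fb i * E i ^ Suc k) + smul sc (vq^k * inverse (qfact k)) (E i ^ k * P2)
      - smul sc (inverse vq^k * inverse (qfact k)) (E i ^ k * Q2)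
      + smul sc (inverse (qfact (Suc k)) * (qint (Suc k) * qint k)) (E i ^ (k - 1) * R2)"
      unfolding C2 by (simp only: S co_a co_b)
    also have "\<dots> = ?R"
    proof (cases k)
      case 0
      show ?thesis unfolding mk dp0 dp1 dp2 pw1 pw3 0 P2_def Q2_def R2_def j_def
        by (simp add: S sc_fold qint_0 mult.assoc algebra_simps)
    next
      case (Suc k')
      show ?thesis unfolding mk dp0 dp1 dp2 pw1 pw3 Suc P2_def Q2_def R2_def j_def
        by (simp only: co_c) (simp add: S sc_fold mult.assoc algebra_simps)
    qed
    finally show ?thesis .
  qed
  have part3: "i \<le> n - 2 \<longrightarrow>
     Eb i * dpow sc (E (i + 1)) (int m)
       = sc (vq ^ m) * dpow sc (E (i + 1)) (int m) * Eb i
         + dpow sc (E (i + 1)) (int m - 1) * (E i * Eb (i + 1) - sc vq * Eb (i + 1) * E i)"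
  proof
    assume i2: "i \<le> n - 2"
    define G where "G = E (i + 1)"
    define Y where "Y = E i * Eb (i + 1) - sc vq * Eb (i + 1) * E i"
    have jN1: "i + 1 \<in> {1..n-1}" using i i2 by auto
    have g11: "E i * Eb (i + 1) - sc vq * Eb (i + 1) * E i = Eb i * E (i + 1) - sc vq * E (i + 1) * Eb i"
      using r11 i i2 by auto
    have g12: "E (i+1) ^ 2 * Eb i - sc (vq + inverse vq) * E (i+1) * Eb i * E (i+1) + Eb i * E (i+1) ^ 2 = 0"
    proof -
      have h: "(\<forall>X\<in>{E i, Eb i}. E (i+1) ^ 2 * X - sc (vq + inverse vq) * E (i+1) * X * E (i+1) + X * E (i+1) ^ 2 = 0)"
        using bspec[OF bspec[OF r12 jN1] iN1] by blast
      show ?thesis using bspec[OF h, of "Eb i"] by blast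
    qed
    have Yeq: "Y = Eb i * G - smul sc v (G * Eb i)"
      unfolding Y_def G_def g11 by (simp add: smul_def v_def mult.assoc)
    have serre: "Eb i * (G * G) = smul sc (v + w) (G * (Eb i * G)) - G * (G * Eb i)"
    proof -
      have "G * (G * Eb i) - smul sc (v + w) (G * (Eb i * G)) + Eb i * (G * G) = 0"
        using g12 unfolding G_def by (simp add: power2_eq_square smul_def v_def w_def mult.assoc)
      thus ?thesis by (simp add: algebra_simps eq_neg_iff_add_eq_0[symmetric])
    qed
    have h03: "Eb i * G = smul sc v (G * Eb i) + Y" using Yeq by simp
    have hY: "Y * G = smul sc w (G * Y)"
      unfolding Yeq by (simp add: algebra_simps S serre vw vw3)
    have C3: "Eb i * G ^ Suc k = smul sc (vq ^ Suc k) (G ^ Suc k * Eb i) + smul sc (qint (Suc k)) (G ^ k * Y)"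
      using core3[OF alg h03 hY, of "\<lambda>k. qint (Suc k)" k]
      by (simp only: qint_1 qint_1[unfolded One_nat_def] v_def w_def qint_Suc2 simp_thms)
    have "Eb i * dpow sc G (int m) = smul sc (inverse (qfact (Suc k))) (Eb i * G ^ Suc k)"
      unfolding mk dp0 by (simp add: S)
    also have "\<dots> = smul sc (inverse (qfact (Suc k)) * vq ^ Suc k) (G ^ Suc k * Eb i)
        + smul sc (inverse (qfact k)) (G ^ k * Y)"
      unfolding C3 by (simp only: S co_d)
    also have "\<dots> = sc (vq ^ m) * dpow sc G (int m) * Eb i + dpow sc G (int m - 1) * Y"
      unfolding mk dp0 dp1 by (simp add: S sc_fold mult.assoc mult.commute)
    finally show "Eb i * dpow sc (E (i + 1)) (int m)
       = sc (vq ^ m) * dpow sc (E (i + 1)) (int m) * Eb i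
         + dpow sc (E (i + 1)) (int m - 1) * (E i * Eb (i + 1) - sc vq * Eb (i + 1) * E i)"
      unfolding G_def Y_def .
  qed
  show ?thesis using part1 part2 part3 by blast
qed

end
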